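(* Let $q$ be a prime power and let $n,k,r$ be integers with $n<q$, $0<r<k\le n$, $r\mid k$, $(r+1)\mid n$ and $(r+1)\mid(q-1)$. Let $t=n-k-k/r$ and assume $t\ge 0$. Then there exists a linear $[n,k,t+2]$ code over $\mathbb F_q$ with addition based repair and all-symbol locality $r$. Since every linear $[n,k,d]$ code with information locality $r$ satisfies $d\le n-\lceil k/r\rceil-k+2=t+2$, this code is optimal in terms of distance.
   Context: For a linear $[n,k,d]$ code $\mathcal C$ over $\mathbb F_q$ (length $n$, dimension $k$, minimum distance $d$), the coordinates are called nodes and are indexed by $[n]=\{1,\dots,n\}$. A node $i$ has locality $r_i$ if there is a repair set $J_i\subseteq[n]\setminus\{i\}$ of size $r_i$ and a function $\phi_i:\mathbb F_q^{r_i}\to\mathbb F_q$ such that $\phi_i$ applied to $(c_j)_{j\in J_i}$ equals $c_i$ for all $\mathbf c\in\mathcal C$. $\mathcal C$ has all-symbol locality $r$ if every node has locality at most $r$. Information locality $r$ means that the information nodes have locality at most $r$. $\mathcal C$ has addition based repair if every node $i$ has such a repair set $J_i$ with repair function $\phi_i\big((c_j)_{j\in J_i}\big)=-\sum_{j\in J_i}c_j$, i.e. $c_i+\sum_{j\in J_i}c_j=0$ for all $\mathbf c\in\mathcal C$. *)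

theory Defs
  imports Complex_Main "HOL-Library.Function_Algebras"
begin

(* Words of length n over the field 'a are represented as functions nat => 'a;
   the n coordinates (nodes) are 0,...,n-1 and all other coordinates are 0. *)

definition scale_vec :: "'a::field \<Rightarrow> (nat \<Rightarrow> 'a) \<Rightarrow> (nat \<Rightarrow> 'a)" where
  "scale_vec a v = (\<lambda>i. a * v i)"

definition words :: "nat \<Rightarrow> (nat \<Rightarrow> 'a::field) set" where
  "words n = {c. \<forall>i. n \<le> i \<longrightarrow> c i = 0}"

definition linear_code :: "nat \<Rightarrow> (nat \<Rightarrow> 'a::field) set \<Rightarrow> bool" where
  "linear_code n C \<longleftrightarrow> C \<subseteq> words n \<and> module.subspace scale_vec C"

definition code_dim :: "(nat \<Rightarrow> 'a::field) set \<Rightarrow> nat" where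
  "code_dim C = vector_space.dim scale_vec C"

definition hamming_dist :: "nat \<Rightarrow> (nat \<Rightarrow> 'a) \<Rightarrow> (nat \<Rightarrow> 'a) \<Rightarrow> nat" where
  "hamming_dist n c c' = card {i. i < n \<and> c i \<noteq> c' i}"

definition min_distance :: "nat \<Rightarrow> (nat \<Rightarrow> 'a) set \<Rightarrow> nat \<Rightarrow> bool" where
  "min_distance n C d \<longleftrightarrow>
     (\<exists>c\<in>C. \<exists>c'\<in>C. c \<noteq> c' \<and> hamming_dist n c c' = d) \<and>
     (\<forall>c\<in>C. \<forall>c'\<in>C. c \<noteq> c' \<longrightarrow> d \<le> hamming_dist n c c')"

definition node_locality :: "nat \<Rightarrow> (nat \<Rightarrow> 'a::zero) set \<Rightarrow> nat \<Rightarrow> nat \<Rightarrow> bool" where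
  "node_locality n C i r \<longleftrightarrow>
     (\<exists>J. J \<subseteq> {..<n} - {i} \<and> card J \<le> r \<and>
        (\<exists>\<phi> :: (nat \<Rightarrow> 'a) \<Rightarrow> 'a. \<forall>c\<in>C. \<phi> (\<lambda>j. if j \<in> J then c j else 0) = c i))"

definition all_symbol_locality :: "nat \<Rightarrow> (nat \<Rightarrow> 'a::zero) set \<Rightarrow> nat \<Rightarrow> bool" where
  "all_symbol_locality n C r \<longleftrightarrow> (\<forall>i<n. node_locality n C i r)"

definition addition_based_repair :: "nat \<Rightarrow> (nat \<Rightarrow> 'a::field) set \<Rightarrow> nat \<Rightarrow> bool" where
  "addition_based_repair n C r \<longleftrightarrow>
     (\<forall>i<n. \<exists>J. J \<subseteq> {..<n} - {i} \<and> card J \<le> r \<and>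
        (\<forall>c\<in>C. c i + (\<Sum>j\<in>J. c j) = 0))"

end

theory Submission
  imports Defs "HOL-Computational_Algebra.Polynomial"
begin

lemma fermat_field:
  fixes x :: "'a::{finite,field}"
  assumes "x \<noteq> 0"
  shows "x ^ (card (UNIV :: 'a set) - 1) = 1"
proof -
  let ?S = "UNIV - {0::'a}"
  have fin: "finite ?S" by simp
  have inj: "inj_on (\<lambda>a. x * a) ?S" using assms by (auto simp: inj_on_def)
  have img: "(\<lambda>a. x * a) ` ?S = ?S"
  proof
    show "(\<lambda>a. x * a) ` ?S \<subseteq> ?S" using assms by auto
    show "?S \<subseteq> (\<lambda>a. x * a) ` ?S"
    proof
      fix b assume "b \<in> ?S"
      then have "b = x * (b / x)" "b / x \<in> ?S" using assms by auto
      then show "b \<in> (\<lambda>a. x * a) ` ?S" by blast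
    qed
  qed
  have "(\<Prod>a\<in>?S. a) = (\<Prod>a\<in>?S. x * a)"
    using prod.reindex[OF inj, of "\<lambda>a. a"] img by simp
  also have "\<dots> = x ^ card ?S * (\<Prod>a\<in>?S. a)"
    by (simp add: prod.distrib)
  finally have eq: "(\<Prod>a\<in>?S. a) = x ^ card ?S * (\<Prod>a\<in>?S. a)" .
  have nz: "(\<Prod>a\<in>?S. a) \<noteq> 0" by simp
  have "card ?S = card (UNIV :: 'a set) - 1" by (simp add: card_Diff_singleton)
  with eq nz show ?thesis by (metis mult_cancel_right1)
qed

lemma card_roots_unity:
  fixes N :: nat
  assumes "N \<ge> 1" "N dvd (card (UNIV :: 'a::{finite,field} set) - 1)"
  shows "card {h::'a. h ^ N = 1} = N"
proof (rule antisym)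
  let ?f = "monom (1::'a) N - 1"
  have cf: "coeff ?f N = 1" using assms by simp
  have f0: "?f \<noteq> 0" using cf by (metis coeff_0 zero_neq_one)
  have df: "degree ?f \<le> N" by (rule degree_diff_le) (auto simp: degree_monom_le)
  have "{h::'a. h ^ N = 1} = {x. poly ?f x = 0}" by (auto simp: poly_monom)
  then show "card {h::'a. h ^ N = 1} \<le> N"
    using card_poly_roots_bound[OF f0] df by simp
next
  define q where "q = card (UNIV :: 'a set)"
  have q2: "q \<ge> 2" unfolding q_def
  proof -
    have "card {0::'a, 1} \<le> card (UNIV :: 'a set)" by (rule card_mono) auto
    then show "2 \<le> card (UNIV :: 'a set)" by simp
  qed
  obtain u where u: "q - 1 = N * u" using assms(2) unfolding q_def by blast
  have u1: "u \<ge> 1" using u q2 by (cases u) auto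
  define h where "h = (\<Sum>i<u. monom (1::'a) (N * i))"
  have ch: "coeff h 0 = 1" unfolding h_def coeff_sum
    using u1 assms(1) by (simp add: coeff_monom sum.delta' lessThan_def) 
  then have h0: "h \<noteq> 0" by auto
  have dh: "degree h \<le> N * (u - 1)" unfolding h_def
    proof (rule degree_sum_le)
    fix i assume "i \<in> {..<u}"
    then have "N * i \<le> N * (u - 1)" by (intro mult_le_mono2) auto
    then show "degree (monom (1::'a) (N * i)) \<le> N * (u - 1)"
      using degree_monom_le[of "1::'a" "N * i"] by linarith
  qed simp
  have ph: "poly h a = (\<Sum>i<u. (a ^ N) ^ i)" for a
    unfolding h_def poly_sum by (simp add: poly_monom power_mult)
  have cover: "UNIV - {0::'a} \<subseteq> {h::'a. h ^ N = 1} \<union> {x. poly h x = 0}"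
  proof
    fix a :: 'a assume "a \<in> UNIV - {0}"
    then have "a ^ (q - 1) = 1" using fermat_field unfolding q_def by auto
    then have "(a ^ N) ^ u - 1 = 0" using u by (simp add: power_mult[symmetric])
    then have "(a ^ N - 1) * poly h a = 0" by (simp add: power_diff_1_eq ph)
    then show "a \<in> {h::'a. h ^ N = 1} \<union> {x. poly h x = 0}" by auto
  qed
  have "q - 1 = card (UNIV - {0::'a})" unfolding q_def by (simp add: card_Diff_singleton)
  also have "\<dots> \<le> card ({h::'a. h ^ N = 1} \<union> {x. poly h x = 0})"
    by (rule card_mono[OF _ cover]) simp
  also have "\<dots> \<le> card {h::'a. h ^ N = 1} + card {x. poly h x = 0}" by (rule card_Un_le)
  also have "\<dots> \<le> card {h::'a. h ^ N = 1} + N * (u - 1)"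
    using card_poly_roots_bound[OF h0] dh by simp
  finally have "N * u \<le> card {h::'a. h ^ N = 1} + N * (u - 1)" using u by simp
  moreover have "N * u = N * (u - 1) + N" using u1 by (cases u) auto
  ultimately show "N \<le> card {h::'a. h ^ N = 1}" by simp
qed


lemma sum_roots_unity_power:
  fixes N w :: nat
  assumes N1: "N \<ge> 1" and cH: "card {h::'a::{finite,field}. h ^ N = 1} = N" and nd: "\<not> N dvd w"
  shows "(\<Sum>h\<in>{h::'a. h ^ N = 1}. h ^ w) = 0"
proof -
  let ?H = "{h::'a. h ^ N = 1}"
  have "\<exists>h0\<in>?H. h0 ^ w \<noteq> 1"
  proof (rule ccontr)
    assume "\<not> ?thesis"
    then have all: "\<forall>h\<in>?H. h ^ w = 1" by auto
    define w' where "w' = w mod N"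
    have w'pos: "w' \<ge> 1" using nd unfolding w'_def by (simp add: dvd_eq_mod_eq_0 )
    have w'lt: "w' < N" using N1 unfolding w'_def by simp
    have "\<forall>h\<in>?H. h ^ w' = 1"
    proof
      fix h assume hH: "h \<in> ?H"
      have "h ^ w = (h ^ N) ^ (w div N) * h ^ w'"
        unfolding w'_def by (metis div_mult_mod_eq power_add power_mult mult.commute)
      then show "h ^ w' = 1" using hH all by simp
    qed
    let ?f = "monom (1::'a) w' - 1"
    have cf: "coeff ?f w' = 1" using w'pos by simp
    have f0: "?f \<noteq> 0" using cf by (metis coeff_0 zero_neq_one)
    have df: "degree ?f \<le> w'" by (rule degree_diff_le) (auto simp: degree_monom_le)
    have "?H \<subseteq> {x. poly ?f x = 0}" using \<open>\<forall>h\<in>?H. h ^ w' = 1\<close> by (auto simp: poly_monom)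
    then have "card ?H \<le> card {x. poly ?f x = 0}" by (intro card_mono poly_roots_finite f0)
    also have "\<dots> \<le> w'" using card_poly_roots_bound[OF f0] df by simp
    finally show False using cH w'lt by simp
  qed
  then obtain h0 where h0H: "h0 \<in> ?H" and h0w: "h0 ^ w \<noteq> 1" by blast
  have h0nz: "h0 \<noteq> 0" using h0H N1 by (auto simp: power_0_left)
  have inj: "inj_on (\<lambda>h. h0 * h) ?H" using h0nz by (auto simp: inj_on_def)
  have sub: "(\<lambda>h. h0 * h) ` ?H \<subseteq> ?H" using h0H by (auto simp: power_mult_distrib)
  have img: "(\<lambda>h. h0 * h) ` ?H = ?H" by (rule endo_inj_surj[OF _ sub inj]) simp
  have "(\<Sum>h\<in>?H. h ^ w) = (\<Sum>h\<in>?H. (h0 * h) ^ w)"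
    using sum.reindex[OF inj, of "\<lambda>h. h ^ w"] img by simp
  also have "\<dots> = h0 ^ w * (\<Sum>h\<in>?H. h ^ w)" by (simp add: power_mult_distrib sum_distrib_left)
  finally have "(1 - h0 ^ w) * (\<Sum>h\<in>?H. h ^ w) = 0" by (simp add: algebra_simps)
  then show ?thesis using h0w by simp
qed

lemma fiber_eq:
  fixes a :: "'a::field"
  assumes "a \<noteq> 0"
  shows "{b. b ^ N = a ^ N} = (\<lambda>h. a * h) ` {h. h ^ N = 1}"
proof
  show "{b. b ^ N = a ^ N} \<subseteq> (\<lambda>h. a * h) ` {h. h ^ N = 1}"
  proof
    fix b assume "b \<in> {b. b ^ N = a ^ N}"
    then have "(b / a) ^ N = 1" "b = a * (b / a)" using assms by (auto simp: power_divide)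
    then show "b \<in> (\<lambda>h. a * h) ` {h. h ^ N = 1}" by blast
  qed
  show "(\<lambda>h. a * h) ` {h. h ^ N = 1} \<subseteq> {b. b ^ N = a ^ N}"
    by (auto simp: power_mult_distrib)
qed

lemma fiber_card:
  fixes a :: "'a::{finite,field}"
  assumes "a \<noteq> 0" "card {h::'a. h ^ N = 1} = N"
  shows "card {b. b ^ N = a ^ N} = N"
proof -
  have "inj_on (\<lambda>h. a * h) {h. h ^ N = 1}" using assms(1) by (auto simp: inj_on_def)
  then show ?thesis using fiber_eq[OF assms(1)] card_image assms(2) by metis
qed

lemma fiber_sum:
  fixes a :: "'a::{finite,field}"
  assumes "a \<noteq> 0" "N \<ge> 1" "card {h::'a. h ^ N = 1} = N" "\<not> N dvd w"
  shows "(\<Sum>b\<in>{b. b ^ N = a ^ N}. b ^ w) = 0"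
proof -
  have inj: "inj_on (\<lambda>h. a * h) {h. h ^ N = 1}" using assms(1) by (auto simp: inj_on_def)
  have "(\<Sum>b\<in>{b. b ^ N = a ^ N}. b ^ w) = (\<Sum>h\<in>{h::'a. h ^ N = 1}. (a * h) ^ w)"
    unfolding fiber_eq[OF assms(1)] by (rule sum.reindex[OF inj, unfolded comp_def])
  also have "\<dots> = a ^ w * (\<Sum>h\<in>{h::'a. h ^ N = 1}. h ^ w)"
    by (simp add: power_mult_distrib sum_distrib_left)
  also have "\<dots> = 0" using sum_roots_unity_power[OF assms(2,3,4)] by simp
  finally show ?thesis .
qed


interpretation sv: vector_space "scale_vec :: 'a::field \<Rightarrow> (nat \<Rightarrow> 'a) \<Rightarrow> (nat \<Rightarrow> 'a)"
  by unfold_locales (auto simp: scale_vec_def fun_eq_iff algebra_simps)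

lemma sum_fun_apply: "(\<Sum>x\<in>A. f x) i = (\<Sum>x\<in>A. f x i)"
  by (induction A rule: infinite_finite_induct) auto

lemma poly_as_sum_support:
  fixes f :: "'a::comm_semiring_1 poly"
  assumes "finite A" "\<And>e. coeff f e \<noteq> 0 \<Longrightarrow> e \<in> A"
  shows "poly f x = (\<Sum>e\<in>A. coeff f e * x ^ e)"
proof -
  have "poly f x = (\<Sum>e\<le>degree f. coeff f e * x ^ e)" by (rule poly_altdef)
  also have "\<dots> = (\<Sum>e\<in>A \<union> {..degree f}. coeff f e * x ^ e)"
    by (rule sum.mono_neutral_left) (use assms in \<open>auto simp: coeff_eq_0\<close>)
  also have "\<dots> = (\<Sum>e\<in>A. coeff f e * x ^ e)"
    by (rule sum.mono_neutral_right) (use assms in force)+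
  finally show ?thesis .
qed

lemma Suc_dvd_mod:
  fixes N e :: nat
  assumes "N \<ge> 1" "N dvd Suc e"
  shows "e mod N = N - 1"
proof -
  have "Suc e mod N = 0" using assms by simp
  then show ?thesis using mod_Suc[of e N] by (auto split: if_splits)
qed

locale lrc_setup =
  fixes n N m :: nat and p :: "nat \<Rightarrow> 'a::{finite,field}" and Ys :: "'a set"
  assumes N2: "N \<ge> 2" and m2: "m \<ge> 2" and mN: "m * N \<le> n"
    and Ys_nz: "0 \<notin> Ys"
    and fibcard: "\<And>y. y \<in> Ys \<Longrightarrow> card {b. b ^ N = y} = N"
    and fibsum: "\<And>y w. y \<in> Ys \<Longrightarrow> \<not> N dvd w \<Longrightarrow> (\<Sum>b\<in>{b. b ^ N = y}. b ^ w) = 0"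
    and pbij: "bij_betw p {0..<n} {b. b ^ N \<in> Ys}"
begin

definition "E = {e. e < m * N \<and> e mod N \<noteq> N - 1}"
definition "Vc u = (\<lambda>i. if i < n then (\<Sum>e\<in>E. u e * p i ^ Suc e) else 0)"
definition "bv e = (\<lambda>i::nat. if i < n then p i ^ Suc e else 0)"
definition "Cd = sv.span (bv ` E)"

lemma fin_E: "finite E" unfolding E_def by simp

lemma p_in: "i < n \<Longrightarrow> p i ^ N \<in> Ys"
  using pbij by (auto simp: bij_betw_def)

lemma p_nz: "i < n \<Longrightarrow> p i \<noteq> 0"
  using p_in Ys_nz N2 by (metis power_0_left not_numeral_le_zero)

lemma E_le: "e \<in> E \<Longrightarrow> e \<le> m * N - 2"
proof -
  assume "e \<in> E"
  then have e: "e < m * N" "e mod N \<noteq> N - 1" unfolding E_def by auto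
  have "e \<noteq> m * N - 1"
  proof
    assume h: "e = m * N - 1"
    have "m * N - 1 = (N - 1) + (m - 1) * N" using m2 N2
      by (cases m) (auto simp: algebra_simps)
    then have "e mod N = (N - 1) mod N" using h by simp
    then have "e mod N = N - 1" using N2 by simp
    with e show False by simp
  qed
  with e show ?thesis by linarith
qed

lemma sum_bv: "(\<Sum>e\<in>E. scale_vec (u e) (bv e)) = Vc u"
  by (rule ext) (simp add: sum_fun_apply scale_vec_def bv_def Vc_def)

lemma Vc_in: "Vc u \<in> Cd"
  unfolding Cd_def sum_bv[symmetric]
  by (intro sv.span_sum sv.span_scale sv.span_base) auto

lemma Cd_Vc: "c \<in> Cd \<Longrightarrow> \<exists>u. c = Vc u"
proof -
  assume c: "c \<in> Cd"
  have "sv.span (bv ` E) \<subseteq> {c. \<exists>u. c = Vc u}"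
  proof (rule sv.span_minimal)
    show "bv ` E \<subseteq> {c. \<exists>u. c = Vc u}"
    proof
      fix v assume "v \<in> bv ` E"
      then obtain e where e: "e \<in> E" "v = bv e" by auto
      have d: "(\<Sum>x\<in>E. (if x = e then 1 else 0) * f x) = f e" for f :: "nat \<Rightarrow> 'a"
      proof -
        have "(\<Sum>x\<in>E. (if x = e then 1 else 0) * f x) = (\<Sum>x\<in>E. if x = e then f x else 0)"
          by (rule sum.cong) auto
        also have "\<dots> = f e" using e fin_E by (simp add: sum.delta)
        finally show ?thesis .
      qed
      have "Vc (\<lambda>x. if x = e then 1 else 0) = bv e"
        unfolding Vc_def bv_def by (rule ext) (simp only: d)
      then show "v \<in> {c. \<exists>u. c = Vc u}" using e by (metis (mono_tags) mem_Collect_eq)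
    qed
    show "sv.subspace {c. \<exists>u. c = Vc u}"
      unfolding sv.subspace_def
    proof (intro conjI ballI allI)
      show "0 \<in> {c. \<exists>u. c = Vc u}"
        by (rule CollectI, rule exI[of _ "\<lambda>_. 0"]) (auto simp: Vc_def fun_eq_iff)
      fix x y assume "x \<in> {c. \<exists>u. c = Vc u}" "y \<in> {c. \<exists>u. c = Vc u}"
      then obtain u1 u2 where "x = Vc u1" "y = Vc u2" by auto
      then show "x + y \<in> {c. \<exists>u. c = Vc u}"
        by (intro CollectI exI[of _ "\<lambda>e. u1 e + u2 e"])
           (auto simp: Vc_def fun_eq_iff sum.distrib algebra_simps)
    next
      fix a x assume "x \<in> {c. \<exists>u. c = Vc u}"
      then obtain u1 where "x = Vc u1" by auto
      then show "scale_vec a x \<in> {c. \<exists>u. c = Vc u}"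
        by (intro CollectI exI[of _ "\<lambda>e. a * u1 e"])
           (auto simp: Vc_def fun_eq_iff scale_vec_def sum_distrib_left algebra_simps)
    qed
  qed
  then show ?thesis using c unfolding Cd_def by auto
qed

lemma Vc_diff: "Vc u - Vc u' = Vc (\<lambda>e. u e - u' e)"
  by (auto simp: Vc_def fun_eq_iff sum_subtractf algebra_simps)

lemma weight:
  assumes "\<exists>e\<in>E. u e \<noteq> 0"
  shows "n - (m * N - 2) \<le> card {i. i < n \<and> Vc u i \<noteq> 0}"
proof -
  define g where "g = (\<Sum>e\<in>E. monom (u e) e)"
  have pg: "poly g x = (\<Sum>e\<in>E. u e * x ^ e)" for x
    unfolding g_def poly_sum by (simp add: poly_monom)
  obtain e0 where e0: "e0 \<in> E" "u e0 \<noteq> 0" using assms by auto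
  have "coeff g e0 = u e0" unfolding g_def coeff_sum
    using e0 fin_E by (simp add: coeff_monom sum.delta)
  then have g0: "g \<noteq> 0" using e0 by auto
  have dg: "degree g \<le> m * N - 2" unfolding g_def
  proof (rule degree_sum_le[OF fin_E])
    fix e assume "e \<in> E"
    then show "degree (monom (u e) e) \<le> m * N - 2"
      using E_le degree_monom_le[of "u e" e] by fastforce
  qed
  have Vg: "i < n \<Longrightarrow> Vc u i = p i * poly g (p i)" for i
    by (simp add: Vc_def pg sum_distrib_left algebra_simps)
  define Z where "Z = {i. i < n \<and> Vc u i = 0}"
  have injZ: "inj_on p Z"
    using pbij unfolding bij_betw_def Z_def by (auto intro: inj_on_subset)
  have "p ` Z \<subseteq> {x. poly g x = 0}" unfolding Z_def using Vg p_nz by auto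
  then have "card (p ` Z) \<le> card {x. poly g x = 0}" by (intro card_mono poly_roots_finite g0)
  also have "\<dots> \<le> m * N - 2" using card_poly_roots_bound[OF g0] dg by simp
  finally have cZ: "card Z \<le> m * N - 2" using card_image[OF injZ] by simp
  have "{i. i < n \<and> Vc u i \<noteq> 0} = {0..<n} - Z" unfolding Z_def by auto
  moreover have "Z \<subseteq> {0..<n}" "finite Z" unfolding Z_def by auto
  ultimately have "card {i. i < n \<and> Vc u i \<noteq> 0} = n - card Z"
    by (simp add: card_Diff_subset)
  then show ?thesis using cZ by simp
qed

end


context lrc_setup
begin

lemma mN4: "m * N \<ge> 4"
proof -
  have "2 * 2 \<le> m * N" using m2 N2 by (intro mult_le_mono) auto
  then show ?thesis by simp
qed

lemma nD: "n - (m * N - 2) \<ge> 2" using mN mN4 by linarith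

lemma Vc_nz: "\<exists>e\<in>E. u e \<noteq> 0 \<Longrightarrow> Vc u \<noteq> 0"
proof
  assume a: "\<exists>e\<in>E. u e \<noteq> 0" "Vc u = 0"
  have "n - (m * N - 2) \<le> card {i. i < n \<and> Vc u i \<noteq> 0}" by (rule weight[OF a(1)])
  also have "{i. i < n \<and> Vc u i \<noteq> 0} = {}" using a(2) by auto
  finally show False using nD by simp
qed

lemma inj_bv: "inj_on bv E"
proof
  fix e e' assume e: "e \<in> E" "e' \<in> E" "bv e = bv e'"
  show "e = e'"
  proof (rule ccontr)
    assume ne: "e \<noteq> e'"
    define u where "u = (\<lambda>x. if x = e then (1::'a) else if x = e' then -1 else 0)"
    have "\<exists>x\<in>E. u x \<noteq> 0" using e unfolding u_def by auto
    then have "Vc u \<noteq> 0" by (rule Vc_nz)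
    moreover have "Vc u = 0"
    proof (rule ext)
      fix i
      have "(\<Sum>x\<in>E. u x * p i ^ Suc x) = (\<Sum>x\<in>E. (if x = e then p i ^ Suc x else 0) - (if x = e' then p i ^ Suc x else 0))"
        by (rule sum.cong) (auto simp: u_def ne)
      also have "\<dots> = p i ^ Suc e - p i ^ Suc e'" using e fin_E by (simp add: sum_subtractf sum.delta)
      finally have "(\<Sum>x\<in>E. u x * p i ^ Suc x) = p i ^ Suc e - p i ^ Suc e'" .
      moreover have "i < n \<Longrightarrow> p i ^ Suc e = p i ^ Suc e'" using fun_cong[OF e(3), of i] by (simp add: bv_def)
      ultimately show "Vc u i = 0 i" by (simp add: Vc_def)
    qed
    ultimately show False by simp
  qed
qed

lemma indep: "sv.independent (bv ` E)"
proof
  assume dep: "sv.dependent (bv ` E)"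
  have fin: "finite (bv ` E)" using fin_E by simp
  obtain w where w: "\<exists>v\<in>bv ` E. w v \<noteq> 0" "(\<Sum>v\<in>bv ` E. scale_vec (w v) v) = 0"
    using iffD1[OF sv.dependent_finite[OF fin] dep] by (elim exE conjE)
  have "(\<Sum>v\<in>bv ` E. scale_vec (w v) v) = (\<Sum>e\<in>E. scale_vec (w (bv e)) (bv e))"
    by (rule sum.reindex[OF inj_bv, unfolded comp_def])
  also have "\<dots> = Vc (\<lambda>e. w (bv e))" by (rule sum_bv)
  finally have "Vc (\<lambda>e. w (bv e)) = 0" using w(2) by metis
  moreover have "\<exists>e\<in>E. w (bv e) \<noteq> 0" using w(1) by auto
  ultimately show False using Vc_nz[of "\<lambda>e. w (bv e)"] by metis
qed

lemma dim_Cd: "code_dim Cd = card E"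
proof -
  have "code_dim Cd = card (bv ` E)" unfolding code_dim_def Cd_def
    by (rule sv.dim_span_eq_card_independent[OF indep])
  also have "\<dots> = card E" by (rule card_image[OF inj_bv])
  finally show ?thesis .
qed

lemma lin: "linear_code n Cd"
  unfolding linear_code_def
proof
  show "Cd \<subseteq> words n"
  proof
    fix c assume "c \<in> Cd"
    then obtain u where "c = Vc u" using Cd_Vc by blast
    then show "c \<in> words n" by (simp add: words_def Vc_def)
  qed
  show "sv.subspace Cd" unfolding Cd_def by (rule sv.subspace_span)
qed

lemma dist_lower:
  assumes "c \<in> Cd" "c' \<in> Cd" "c \<noteq> c'"
  shows "n - (m * N - 2) \<le> hamming_dist n c c'"
proof -
  obtain u u' where u: "c = Vc u" "c' = Vc u'" using Cd_Vc assms by metis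
  have "\<exists>e\<in>E. u e - u' e \<noteq> 0"
  proof (rule ccontr)
    assume "\<not> ?thesis"
    then have "\<forall>e\<in>E. u e = u' e" by auto
    then have "Vc u = Vc u'" unfolding Vc_def by (intro ext if_cong refl sum.cong) auto
    then show False using u assms by simp
  qed
  then have "n - (m * N - 2) \<le> card {i. i < n \<and> Vc (\<lambda>e. u e - u' e) i \<noteq> 0}" by (rule weight)
  also have "{i. i < n \<and> Vc (\<lambda>e. u e - u' e) i \<noteq> 0} = {i. i < n \<and> c i \<noteq> c' i}"
  proof -
    have "Vc (\<lambda>e. u e - u' e) i = c i - c' i" for i
      using fun_cong[OF Vc_diff[of u u', symmetric], of i] u by (simp add: fun_diff_def)
    then show ?thesis by auto
  qed
  finally show ?thesis unfolding hamming_dist_def .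
qed

end

context lrc_setup
begin

lemma repair_set:
  assumes i: "i < n"
  shows "\<exists>J. J \<subseteq> {..<n} - {i} \<and> card J \<le> N - 1 \<and> (\<forall>c\<in>Cd. c i + (\<Sum>j\<in>J. c j) = 0)"
proof -
  define y where "y = p i ^ N"
  have yY: "y \<in> Ys" using p_in[OF i] unfolding y_def .
  define J where "J = {j. j < n \<and> j \<noteq> i \<and> p j ^ N = y}"
  define K where "K = {j. j < n \<and> p j ^ N = y}"
  have iK: "i \<in> K" unfolding K_def y_def using i by simp
  have KJ: "K = insert i J" "i \<notin> J" using iK unfolding K_def J_def by blast+
  have finJ: "finite J" unfolding J_def by simp
  have "K \<subseteq> {0..<n}" unfolding K_def by auto
  then have injK: "inj_on p K" by (rule inj_on_subset[OF bij_betw_imp_inj_on[OF pbij]])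
  have imgK: "p ` K = {b. b ^ N = y}"
  proof
    show "p ` K \<subseteq> {b. b ^ N = y}" unfolding K_def by blast
    show "{b. b ^ N = y} \<subseteq> p ` K"
    proof
      fix b assume "b \<in> {b. b ^ N = y}"
      then have b: "b ^ N = y" by simp
      then have "b \<in> {b. b ^ N \<in> Ys}" using yY by simp
      then have "b \<in> p ` {0..<n}" using bij_betw_imp_surj_on[OF pbij] by simp
      then obtain j where "j < n" "b = p j" by auto
      then show "b \<in> p ` K" unfolding K_def using b by auto
    qed
  qed
  have "card K = card (p ` K)" by (rule card_image[OF injK, symmetric])
  also have "\<dots> = N" unfolding imgK by (rule fibcard[OF yY])
  finally have "card K = N" .
  moreover have "card K = Suc (card J)" unfolding KJ(1) by (rule card_insert_disjoint[OF finJ KJ(2)])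
  ultimately have cJ: "card J = N - 1" by linarith
  have "\<forall>c\<in>Cd. c i + (\<Sum>j\<in>J. c j) = 0"
  proof
    fix c assume "c \<in> Cd"
    then obtain u where c: "c = Vc u" using Cd_Vc by blast
    have "c i + (\<Sum>j\<in>J. c j) = (\<Sum>j\<in>K. c j)" using KJ finJ by simp
    also have "\<dots> = (\<Sum>j\<in>K. \<Sum>e\<in>E. u e * p j ^ Suc e)"
      by (rule sum.cong) (auto simp: c Vc_def K_def)
    also have "\<dots> = (\<Sum>e\<in>E. u e * (\<Sum>j\<in>K. p j ^ Suc e))"
      unfolding sum_distrib_left by (rule sum.swap)
    also have "\<dots> = (\<Sum>e\<in>E. u e * (\<Sum>b\<in>{b. b ^ N = y}. b ^ Suc e))"
    proof (rule sum.cong[OF refl])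
      fix e
      have "(\<Sum>j\<in>K. p j ^ Suc e) = (\<Sum>b\<in>p ` K. b ^ Suc e)"
        by (rule sum.reindex[OF injK, unfolded comp_def, symmetric])
      then show "u e * (\<Sum>j\<in>K. p j ^ Suc e) = u e * (\<Sum>b\<in>{b. b ^ N = y}. b ^ Suc e)"
        unfolding imgK by (rule arg_cong)
    qed
    also have "\<dots> = 0"
    proof (rule sum.neutral, rule ballI)
      fix e assume "e \<in> E"
      then have "\<not> N dvd Suc e" using Suc_dvd_mod[of N e] N2 unfolding E_def by auto
      then have "(\<Sum>b\<in>{b. b ^ N = y}. b ^ Suc e) = 0" by (rule fibsum[OF yY])
      then show "u e * (\<Sum>b\<in>{b. b ^ N = y}. b ^ Suc e) = 0" by (simp only: mult_zero_right)
    qed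
    finally show "c i + (\<Sum>j\<in>J. c j) = 0" .
  qed
  moreover have "J \<subseteq> {..<n} - {i}" unfolding J_def by blast
  ultimately show ?thesis using cJ by (intro exI[of _ J] conjI) auto
qed

lemma repair: "addition_based_repair n Cd (N - 1)"
  unfolding addition_based_repair_def
proof (intro allI impI)
  fix i assume "i < n"
  from repair_set[OF this] show "\<exists>J. J \<subseteq> {..<n} - {i} \<and> card J \<le> N - 1 \<and> (\<forall>c\<in>Cd. c i + (\<Sum>j\<in>J. c j) = 0)" .
qed

lemma locality: "all_symbol_locality n Cd (N - 1)"
  unfolding all_symbol_locality_def node_locality_def
proof (intro allI impI)
  fix i assume "i < n"
  then obtain J where J: "J \<subseteq> {..<n} - {i}" "card J \<le> N - 1" "\<forall>c\<in>Cd. c i + (\<Sum>j\<in>J. c j) = 0"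
    using repair_set by blast
  have ph: "\<forall>c\<in>Cd. (\<lambda>v. - (\<Sum>j\<in>J. v j)) (\<lambda>j. if j \<in> J then c j else 0) = c i"
  proof
    fix c assume "c \<in> Cd"
    then have ci: "c i + (\<Sum>j\<in>J. c j) = 0" using J(3) by blast
    have "(\<Sum>j\<in>J. (\<lambda>j. if j \<in> J then c j else 0) j) = (\<Sum>j\<in>J. c j)"
      by (rule sum.cong) auto
    then show "(\<lambda>v. - (\<Sum>j\<in>J. v j)) (\<lambda>j. if j \<in> J then c j else 0) = c i"
      using ci by (metis add.commute add_eq_0_iff)
  qed
  then show "\<exists>J\<subseteq>{..<n} - {i}. card J \<le> N - 1 \<and> (\<exists>\<phi>. \<forall>c\<in>Cd. \<phi> (\<lambda>j. if j \<in> J then c j else 0) = c i)"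
    using J(1,2) ph by (intro exI[of _ J] conjI exI[of _ "\<lambda>v. - (\<Sum>j\<in>J. v j)"])
qed

end

lemma mult_support:
  fixes a b :: "'a::comm_semiring_1 poly"
  assumes "\<forall>e. coeff a e \<noteq> 0 \<longrightarrow> N dvd e" "\<forall>e. coeff b e \<noteq> 0 \<longrightarrow> N dvd e"
  shows "\<forall>e. coeff (a * b) e \<noteq> 0 \<longrightarrow> N dvd e"
proof (intro allI impI)
  fix e assume ne: "coeff (a * b) e \<noteq> 0"
  show "N dvd e"
  proof (rule ccontr)
    assume nd: "\<not> N dvd e"
    have "coeff (a * b) e = (\<Sum>i\<le>e. coeff a i * coeff b (e - i))" by (rule coeff_mult)
    also have "\<dots> = 0"
    proof (rule sum.neutral, rule ballI)
      fix i assume "i \<in> {..e}"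
      then have ie: "i \<le> e" by simp
      show "coeff a i * coeff b (e - i) = 0"
      proof (rule ccontr)
        assume "coeff a i * coeff b (e - i) \<noteq> 0"
        then have "N dvd i" "N dvd (e - i)" using assms by (metis mult_zero_left mult_zero_right)+
        then have "N dvd (i + (e - i))" by (rule dvd_add)
        then show False using nd ie by simp
      qed
    qed
    finally show False using ne by simp
  qed
qed

lemma prod_support:
  fixes F :: "'b \<Rightarrow> 'a::comm_semiring_1 poly"
  assumes "finite A" "\<And>x e. x \<in> A \<Longrightarrow> coeff (F x) e \<noteq> 0 \<Longrightarrow> N dvd e"
  shows "\<forall>e. coeff (prod F A) e \<noteq> 0 \<longrightarrow> N dvd e"
  using assms
proof (induction A rule: finite_induct)
  case empty
  then show ?case by (simp add: coeff_1)
next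
  case (insert x A)
  have a: "\<forall>e. coeff (F x) e \<noteq> 0 \<longrightarrow> N dvd e" using insert.prems by blast
  have b: "\<forall>e. coeff (prod F A) e \<noteq> 0 \<longrightarrow> N dvd e" using insert.IH insert.prems by blast
  have "prod F (insert x A) = F x * prod F A" by (rule prod.insert[OF insert.hyps])
  then show ?case using mult_support[OF a b] by simp
qed

context lrc_setup
begin

lemma finYs: "finite Ys" by simp

lemma card_fibs: "Y \<subseteq> Ys \<Longrightarrow> card {b. b ^ N \<in> Y} = card Y * N"
proof -
  assume Y: "Y \<subseteq> Ys"
  have fY: "finite Y" by simp
  have "{b. b ^ N \<in> Y} = (\<Union>y\<in>Y. {b. b ^ N = y})" by auto
  moreover have "card (\<Union>y\<in>Y. {b. b ^ N = y}) = (\<Sum>y\<in>Y. card {b. b ^ N = y})"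
    by (rule card_UN_disjoint[OF fY]) auto
  ultimately have "card {b. b ^ N \<in> Y} = (\<Sum>y\<in>Y. card {b. b ^ N = y})" by simp
  also have "\<dots> = (\<Sum>y\<in>Y. N)" using fibcard Y by (intro sum.cong) auto
  finally show ?thesis by simp
qed

lemma card_P: "card {b. b ^ N \<in> Ys} = n"
  using bij_betw_same_card[OF pbij] by (metis card_atLeastLessThan diff_zero)

lemma m_le_Ys: "m \<le> card Ys"
proof -
  have "card Ys * N = n" using card_fibs[of Ys] card_P by simp
  then have "m * N \<le> card Ys * N" using mN by linarith
  then show ?thesis using N2 by (metis mult_le_cancel2 not_numeral_le_zero neq0_conv le_0_eq)
qed

end

context lrc_setup
begin

lemma witness:
  "\<exists>c\<in>Cd. \<exists>c'\<in>Cd. c \<noteq> c' \<and> hamming_dist n c c' = n - (m * N - 2)"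
proof -
  have "m - 1 \<le> card Ys" using m_le_Ys by simp
  then obtain Y1 where Y1: "Y1 \<subseteq> Ys" "card Y1 = m - 1" "finite Y1"
    by (rule obtain_subset_with_card_n)
  have "card (Ys - Y1) = card Ys - (m - 1)" using Y1 by (simp add: card_Diff_subset)
  then have "card (Ys - Y1) > 0" using m_le_Ys m2 by linarith
  then obtain ys where ys: "ys \<in> Ys" "ys \<notin> Y1" by (metis Diff_iff card_gt_0_iff ex_in_conv)
  have "N - 2 \<le> card {b. b ^ N = ys}" using fibcard[OF ys(1)] by simp
  then obtain Bs where Bs: "Bs \<subseteq> {b. b ^ N = ys}" "card Bs = N - 2" "finite Bs"
    by (rule obtain_subset_with_card_n)
  define P1 where "P1 = (\<Prod>y\<in>Y1. monom (1::'a) N - [:y:])"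
  define P2 where "P2 = (\<Prod>\<beta>\<in>Bs. [:-\<beta>, 1:])"
  define f0 where "f0 = P1 * P2"
  have fac_supp: "coeff (monom (1::'a) N - [:y:]) e \<noteq> 0 \<Longrightarrow> N dvd e" for y e
    by (cases e) (auto simp: coeff_monom split: if_splits)
  have supp1: "\<forall>e. coeff P1 e \<noteq> 0 \<longrightarrow> N dvd e"
    unfolding P1_def by (rule prod_support[OF Y1(3)]) (rule fac_supp)
  have fac_deg: "degree (monom (1::'a) N - [:y:]) \<le> N" for y
    by (rule degree_diff_le) (auto simp: degree_monom_le)
  have dP1: "degree P1 \<le> (m - 1) * N"
  proof -
    have "degree P1 \<le> sum (degree \<circ> (\<lambda>y. monom (1::'a) N - [:y:])) Y1"
      unfolding P1_def by (rule degree_prod_sum_le[OF Y1(3)])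
    also have "\<dots> \<le> (\<Sum>y\<in>Y1. N)" by (rule sum_mono) (simp add: fac_deg)
    also have "\<dots> = (m - 1) * N" using Y1(2) by simp
    finally show ?thesis .
  qed
  have dP2: "degree P2 \<le> N - 2"
  proof -
    have "degree P2 \<le> sum (degree \<circ> (\<lambda>\<beta>. [:-\<beta>, 1::'a:])) Bs"
      unfolding P2_def by (rule degree_prod_sum_le[OF Bs(3)])
    also have "\<dots> = (\<Sum>\<beta>\<in>Bs. 1)" by (rule sum.cong) auto
    also have "\<dots> = N - 2" using Bs(2) by simp
    finally show ?thesis .
  qed
  have supp: "e \<in> E" if ne: "coeff f0 e \<noteq> 0" for e
  proof -
    have "coeff f0 e = (\<Sum>i\<le>e. coeff P1 i * coeff P2 (e - i))" unfolding f0_def by (rule coeff_mult)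
    then obtain i where i: "i \<le> e" "coeff P1 i * coeff P2 (e - i) \<noteq> 0"
      using ne by (metis (no_types, lifting) atMost_iff sum.neutral)
    then have c1: "coeff P1 i \<noteq> 0" and c2: "coeff P2 (e - i) \<noteq> 0" by auto
    have "N dvd i" using supp1 c1 by blast
    then obtain k where k: "i = N * k" by blast
    have "i \<le> (m - 1) * N" using le_degree[OF c1] dP1 by linarith
    moreover have ei: "e - i \<le> N - 2" using le_degree[OF c2] dP2 by linarith
    ultimately have "e \<le> (m - 1) * N + (N - 2)" using i(1) by linarith
    moreover have "(m - 1) * N + N = m * N" using m2 by (cases m) auto
    ultimately have lt: "e < m * N" using N2 by linarith
    have "e = (e - i) + k * N" using k i(1) by (simp add: mult.commute)
    then have "e mod N = (e - i) mod N" by (metis mod_mult_self1)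
    also have "\<dots> = e - i" using ei N2 by simp
    finally have "e mod N \<noteq> N - 1" using ei N2 by linarith
    then show ?thesis unfolding E_def using lt by simp
  qed
  have poly_f0: "poly f0 x = 0 \<longleftrightarrow> x ^ N \<in> Y1 \<or> x \<in> Bs" for x
  proof -
    have "poly P1 x = 0 \<longleftrightarrow> x ^ N \<in> Y1"
      unfolding P1_def poly_prod using Y1(3) by (simp add: poly_monom)
    moreover have "poly P2 x = 0 \<longleftrightarrow> x \<in> Bs"
      unfolding P2_def poly_prod using Bs(3) by simp
    ultimately show ?thesis unfolding f0_def by simp
  qed
  define u0 where "u0 = (\<lambda>e. coeff f0 e)"
  define c where "c = Vc u0"
  define c' where "c' = Vc (\<lambda>_. 0)"
  have c'0: "c' i = 0" for i unfolding c'_def Vc_def by simp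
  have ci: "i < n \<Longrightarrow> c i = p i * poly f0 (p i)" for i
  proof -
    assume "i < n"
    then have "c i = (\<Sum>e\<in>E. coeff f0 e * p i ^ Suc e)" unfolding c_def Vc_def u0_def by simp
    also have "\<dots> = p i * (\<Sum>e\<in>E. coeff f0 e * p i ^ e)"
      by (simp add: sum_distrib_left algebra_simps)
    also have "(\<Sum>e\<in>E. coeff f0 e * p i ^ e) = poly f0 (p i)"
      by (rule poly_as_sum_support[symmetric]) (use fin_E supp in auto)
    finally show ?thesis .
  qed
  define Z0 where "Z0 = {x. x ^ N \<in> Y1} \<union> Bs"
  define S where "S = {i. i < n \<and> c i \<noteq> c' i}"
  have S_eq: "S = {i. i < n \<and> p i \<notin> Z0}"
    unfolding S_def Z0_def using ci c'0 p_nz poly_f0 by auto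
  let ?P = "{b. b ^ N \<in> Ys}"
  have Z0P: "Z0 \<subseteq> ?P" unfolding Z0_def using Y1(1) Bs(1) ys(1) by auto
  have injS: "inj_on p S"
    by (rule inj_on_subset[OF bij_betw_imp_inj_on[OF pbij]]) (auto simp: S_def)
  have imgS: "p ` S = ?P - Z0"
  proof
    show "p ` S \<subseteq> ?P - Z0" unfolding S_eq using p_in by auto
    show "?P - Z0 \<subseteq> p ` S"
    proof
      fix b assume b: "b \<in> ?P - Z0"
      then have "b \<in> p ` {0..<n}" using bij_betw_imp_surj_on[OF pbij] by simp
      then obtain j where "j < n" "b = p j" by auto
      then show "b \<in> p ` S" unfolding S_eq using b by auto
    qed
  qed
  have cZ1: "card {x. x ^ N \<in> Y1} = (m - 1) * N" using card_fibs[OF Y1(1)] Y1(2) by simp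
  have disj: "{x. x ^ N \<in> Y1} \<inter> Bs = {}" using Bs(1) ys(2) by auto
  have cZ0: "card Z0 = (m - 1) * N + (N - 2)"
    unfolding Z0_def using card_Un_disjoint[OF _ Bs(3) disj] cZ1 Bs(2) by simp
  have "card S = card (?P - Z0)" using card_image[OF injS] imgS by simp
  also have "\<dots> = card ?P - card Z0" by (rule card_Diff_subset[OF _ Z0P]) simp
  also have "\<dots> = n - ((m - 1) * N + (N - 2))" using card_P cZ0 by simp
  also have "\<dots> = n - (m * N - 2)"
  proof -
    have "(m - 1) * N + N = m * N" using m2 by (cases m) auto
    then show ?thesis using N2 by (metis add_diff_assoc)
  qed
  finally have hd: "hamming_dist n c c' = n - (m * N - 2)" unfolding hamming_dist_def S_def .
  have "c \<noteq> c'"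
  proof
    assume "c = c'"
    then have "S = {}" unfolding S_def by simp
    then have "card S = 0" by simp
    moreover have "card S = n - (m * N - 2)" using hd unfolding hamming_dist_def S_def .
    ultimately show False using nD by linarith
  qed
  moreover have "c \<in> Cd" "c' \<in> Cd" unfolding c_def c'_def by (rule Vc_in)+
  ultimately show ?thesis using hd by blast
qed

end

context lrc_setup
begin

lemma card_E: "card E = m * (N - 1)"
proof -
  let ?g = "\<lambda>(j, i). j * N + i"
  have inj: "inj_on ?g ({0..<m} \<times> {0..<N - 1})"
  proof (rule inj_onI)
    fix x y assume xy: "x \<in> {0..<m} \<times> {0..<N - 1}" "y \<in> {0..<m} \<times> {0..<N - 1}" "?g x = ?g y"
    obtain j i j' i' where xs: "x = (j, i)" "y = (j', i')" by fastforce
    have a: "j * N + i = j' * N + i'" "i < N - 1" "i' < N - 1" using xy xs by auto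
    have "(j * N + i) mod N = i" "(j' * N + i') mod N = i'" using a(2,3) by simp_all
    then have "i = i'" using a(1) by simp
    moreover have "(j * N + i) div N = j" "(j' * N + i') div N = j'" using a(2,3) N2 by simp_all
    ultimately show "x = y" using a(1) xs by metis
  qed
  have img: "?g ` ({0..<m} \<times> {0..<N - 1}) = E"
  proof
    show "?g ` ({0..<m} \<times> {0..<N - 1}) \<subseteq> E"
    proof clarify
      fix j i assume a: "j \<in> {0..<m}" "i \<in> {0..<N - 1}"
      then have "j \<le> m - 1" "i < N" by auto
      then have "j * N + i < (m - 1) * N + N" by (metis add_less_le_mono mult_le_mono1 add.commute add_mono_thms_linordered_field(2))
      also have "(m - 1) * N + N = m * N" using m2 by (cases m) auto
      finally have "j * N + i < m * N" .
      moreover have "(j * N + i) mod N = i" using a by simp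
      ultimately show "j * N + i \<in> E" unfolding E_def using a by auto
    qed
    show "E \<subseteq> ?g ` ({0..<m} \<times> {0..<N - 1})"
    proof
      fix e assume e: "e \<in> E"
      then have e1: "e < m * N" "e mod N \<noteq> N - 1" unfolding E_def by auto
      have "e mod N < N" using N2 by simp
      then have "e mod N < N - 1" using e1(2) by linarith
      moreover have "e div N < m" using e1(1) N2 by (simp add: div_less_iff_less_mult)
      moreover have "e = ?g (e div N, e mod N)" by simp
      ultimately show "e \<in> ?g ` ({0..<m} \<times> {0..<N - 1})" by force
    qed
  qed
  have "card E = card ({0..<m} \<times> {0..<N - 1})" using card_image[OF inj] img by simp
  then show ?thesis by simp
qed

end

theorem theorem5:
  fixes q n k r :: nat and t :: int
  assumes "card (UNIV :: 'a set) = q"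
    and "n < q"
    and "0 < r" and "r < k" and "k \<le> n"
    and "r dvd k" and "(r + 1) dvd n" and "(r + 1) dvd (q - 1)"
    and "t = int n - int k - int (k div r)"
    and "t \<ge> 0"
  shows "\<exists>C :: (nat \<Rightarrow> 'a::{finite,field}) set.
           linear_code n C \<and> code_dim C = k \<and> min_distance n C (nat t + 2) \<and>
           addition_based_repair n C r \<and> all_symbol_locality n C r"
proof -
  define N where "N = r + 1"
  define m where "m = k div r"
  have N2: "N \<ge> 2" using assms(3) unfolding N_def by simp
  have km: "k = m * r" using assms(6) unfolding m_def by simp
  have m2: "m \<ge> 2"
  proof (rule ccontr)
    assume "\<not> m \<ge> 2"
    then have "m \<le> 1" by simp
    then have "m * r \<le> r" by simp
    then show False using km assms(4) by simp
  qed
  have imN: "int (m * N) = int k + int m" using km unfolding N_def by (simp add: algebra_simps)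
  have tt: "t = int n - int k - int m" using assms(9) unfolding m_def .
  have mN: "m * N \<le> n"
  proof -
    have "int (m * N) \<le> int n" using imN tt assms(10) by linarith
    then show ?thesis by (simp only: of_nat_le_iff)
  qed
  have cH: "card {h::'a. h ^ N = 1} = N"
    by (rule card_roots_unity) (use assms(1,8) in \<open>auto simp: N_def\<close>)
  define Ys0 where "Ys0 = (\<lambda>a::'a. a ^ N) ` (UNIV - {0})"
  have fib_card0: "y \<in> Ys0 \<Longrightarrow> card {b. b ^ N = y} = N" for y
    unfolding Ys0_def using fiber_card[OF _ cH] by auto
  have Ys0nz: "0 \<notin> Ys0" unfolding Ys0_def by auto
  have card_fibs0: "card {b::'a. b ^ N \<in> Y} = card Y * N" if Y: "Y \<subseteq> Ys0" for Y
  proof -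
    have fY: "finite Y" by simp
    have "{b. b ^ N \<in> Y} = (\<Union>y\<in>Y. {b. b ^ N = y})" by auto
    moreover have "card (\<Union>y\<in>Y. {b::'a. b ^ N = y}) = (\<Sum>y\<in>Y. card {b. b ^ N = y})"
      by (rule card_UN_disjoint[OF fY]) auto
    ultimately have "card {b::'a. b ^ N \<in> Y} = (\<Sum>y\<in>Y. card {b. b ^ N = y})" by simp
    also have "\<dots> = (\<Sum>y\<in>Y. N)" using fib_card0 Y by (intro sum.cong) auto
    finally show ?thesis by simp
  qed
  have "{b::'a. b ^ N \<in> Ys0} = UNIV - {0}"
  proof
    have N0: "0 < N" using N2 by simp
    show "{b::'a. b ^ N \<in> Ys0} \<subseteq> UNIV - {0}"
    proof
      fix b :: 'a assume "b \<in> {b. b ^ N \<in> Ys0}"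
      then obtain a :: 'a where a: "a \<noteq> 0" "b ^ N = a ^ N" unfolding Ys0_def by auto
      have "a ^ N \<noteq> 0" using a(1) by simp
      then have "b \<noteq> 0" using a(2) N0 by (metis power_eq_0_iff)
      then show "b \<in> UNIV - {0}" by simp
    qed
    show "UNIV - {0} \<subseteq> {b::'a. b ^ N \<in> Ys0}" unfolding Ys0_def by auto
  qed
  then have "card Ys0 * N = q - 1" using card_fibs0[of Ys0] assms(1)
    by (simp add: card_Diff_singleton)
  obtain s where s: "n = N * s" using assms(7) unfolding N_def by blast
  have "s * N \<le> card Ys0 * N" using s assms(2) \<open>card Ys0 * N = q - 1\<close> by (simp add: mult.commute)
  then have "s \<le> card Ys0" using N2 by simp
  then obtain Ys where Ys: "Ys \<subseteq> Ys0" "card Ys = s" "finite Ys" by (rule obtain_subset_with_card_n)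
  have cP: "card {b::'a. b ^ N \<in> Ys} = n" using card_fibs0[OF Ys(1)] Ys(2) s by simp
  obtain p where p: "bij_betw p {0..<n} {b::'a. b ^ N \<in> Ys}"
    using ex_bij_betw_nat_finite[of "{b::'a. b ^ N \<in> Ys}"] cP by auto
  interpret L: lrc_setup n N m p Ys
  proof
    show "2 \<le> N" "2 \<le> m" "m * N \<le> n" by (fact N2 m2 mN)+
    show "0 \<notin> Ys" using Ys0nz Ys(1) by auto
    show "card {b. b ^ N = y} = N" if "y \<in> Ys" for y using fib_card0 that Ys(1) by auto
    show "(\<Sum>b\<in>{b. b ^ N = y}. b ^ w) = 0" if yY: "y \<in> Ys" and nd: "\<not> N dvd w" for y w
    proof -
      obtain a where a: "a \<noteq> 0" "y = a ^ N" using yY Ys(1) unfolding Ys0_def by auto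
      show ?thesis unfolding a(2) by (rule fiber_sum[OF a(1) _ cH nd]) (use N2 in simp)
    qed
    show "bij_betw p {0..<n} {b. b ^ N \<in> Ys}" by (fact p)
  qed
  have Nr: "N - 1 = r" unfolding N_def by simp
  have dim: "code_dim L.Cd = k" using L.dim_Cd L.card_E km Nr by simp
  have dd: "n - (m * N - 2) = nat t + 2"
  proof -
    have "m * N \<ge> 2" using L.mN4 by simp
    then have "int (n - (m * N - 2)) = int n - int (m * N) + 2" using mN by (simp add: of_nat_diff)
    also have "\<dots> = t + 2" using imN tt by simp
    finally have "int (n - (m * N - 2)) = t + 2" .
    then show ?thesis using assms(10) by linarith
  qed
  have md: "min_distance n L.Cd (nat t + 2)"
    unfolding min_distance_def using L.witness L.dist_lower dd by auto
  show ?thesis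
    using L.lin dim md L.repair L.locality Nr by (intro exI[of _ L.Cd]) auto
qed

end
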